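(* Let $G$ be a proper interval graph on vertex set $[n]$, $t\ge2$, and $I=I_t(G)\subset K[x_1,\dots,x_n]$. Then for every positive integer $m$, $I^m$ has linear quotients.
   Context: $I_t(G)$ is the ideal generated by all squarefree monomials $x_{i_1}\cdots x_{i_t}$ with $\{i_1,\dots,i_t\}$ an independent set of $G$. A monomial ideal $J$ has linear quotients if its minimal monomial generators can be ordered $w_1,\dots,w_r$ so that for each $i\ge2$ the colon ideal $\langle w_1,\dots,w_{i-1}\rangle : w_i$ is generated by variables. A proper interval graph is a graph whose vertices can be assigned real intervals, none properly containing another, such that two vertices are adjacent iff their intervals intersect. *)

theory Defs
  imports Complex_Main
begin

text \<open>Monomials of K[x_1,...,x_n] are exponent vectors nat \<Rightarrow> nat supported in {1..n};
  divisibility of monomials is pointwise \<le>, product is pointwise +.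
  A monomial ideal is represented by the set of monomials it contains
  (it is the K-span of these monomials; the field K plays no role).\<close>

definition mons :: "nat \<Rightarrow> (nat \<Rightarrow> nat) set" where
  "mons n = {u. \<forall>k. k \<notin> {1..n} \<longrightarrow> u k = 0}"

definition mmul :: "(nat \<Rightarrow> nat) \<Rightarrow> (nat \<Rightarrow> nat) \<Rightarrow> (nat \<Rightarrow> nat)" where
  "mmul u v = (\<lambda>k. u k + v k)"

definition mdvd :: "(nat \<Rightarrow> nat) \<Rightarrow> (nat \<Rightarrow> nat) \<Rightarrow> bool" where
  "mdvd u v \<longleftrightarrow> (\<forall>k. u k \<le> v k)"

definition ideal_mons :: "nat \<Rightarrow> (nat \<Rightarrow> nat) set \<Rightarrow> (nat \<Rightarrow> nat) set" where
  "ideal_mons n Gs = {u \<in> mons n. \<exists>g\<in>Gs. mdvd g u}"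

definition min_gens :: "(nat \<Rightarrow> nat) set \<Rightarrow> (nat \<Rightarrow> nat) set" where
  "min_gens M = {u \<in> M. \<forall>v\<in>M. mdvd v u \<longrightarrow> v = u}"

definition colon_mons :: "nat \<Rightarrow> (nat \<Rightarrow> nat) set \<Rightarrow> (nat \<Rightarrow> nat) \<Rightarrow> (nat \<Rightarrow> nat) set" where
  "colon_mons n M w = {u \<in> mons n. mmul u w \<in> M}"

definition var_mon :: "nat \<Rightarrow> (nat \<Rightarrow> nat)" where
  "var_mon j = (\<lambda>k. if k = j then 1 else 0)"

definition generated_by_variables :: "nat \<Rightarrow> (nat \<Rightarrow> nat) set \<Rightarrow> bool" where
  "generated_by_variables n M \<longleftrightarrow> (\<exists>V \<subseteq> {1..n}. M = ideal_mons n (var_mon ` V))"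

definition has_linear_quotients :: "nat \<Rightarrow> (nat \<Rightarrow> nat) set \<Rightarrow> bool" where
  "has_linear_quotients n M \<longleftrightarrow>
     (\<exists>ws. distinct ws \<and> set ws = min_gens M \<and>
        (\<forall>i. 0 < i \<and> i < length ws \<longrightarrow>
           generated_by_variables n (colon_mons n (ideal_mons n (set (take i ws))) (ws ! i))))"

fun pow_gens :: "(nat \<Rightarrow> nat) set \<Rightarrow> nat \<Rightarrow> (nat \<Rightarrow> nat) set" where
  "pow_gens Gs 0 = {\<lambda>k. 0}"
| "pow_gens Gs (Suc m) = {mmul g h | g h. g \<in> Gs \<and> h \<in> pow_gens Gs m}"

definition simple_graph :: "nat \<Rightarrow> nat set set \<Rightarrow> bool" where
  "simple_graph n E \<longleftrightarrow> (\<forall>e\<in>E. e \<subseteq> {1..n} \<and> card e = 2)"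

definition proper_interval_graph :: "nat \<Rightarrow> nat set set \<Rightarrow> bool" where
  "proper_interval_graph n E \<longleftrightarrow> simple_graph n E \<and>
     (\<exists>l r :: nat \<Rightarrow> real.
        (\<forall>i\<in>{1..n}. l i \<le> r i) \<and>
        (\<forall>i\<in>{1..n}. \<forall>j\<in>{1..n}. \<not> ({l i..r i} \<subset> {l j..r j})) \<and>
        (\<forall>i\<in>{1..n}. \<forall>j\<in>{1..n}. i \<noteq> j \<longrightarrow>
            ({i, j} \<in> E \<longleftrightarrow> {l i..r i} \<inter> {l j..r j} \<noteq> {})))"

definition independent_set :: "nat \<Rightarrow> nat set set \<Rightarrow> nat set \<Rightarrow> bool" where
  "independent_set n E S \<longleftrightarrow> S \<subseteq> {1..n} \<and> (\<forall>i\<in>S. \<forall>j\<in>S. {i, j} \<notin> E)"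

definition sqfree_mon :: "nat set \<Rightarrow> (nat \<Rightarrow> nat)" where
  "sqfree_mon S = (\<lambda>k. if k \<in> S then 1 else 0)"

definition It_gens :: "nat \<Rightarrow> nat set set \<Rightarrow> nat \<Rightarrow> (nat \<Rightarrow> nat) set" where
  "It_gens n E t = {sqfree_mon S | S. independent_set n E S \<and> card S = t}"

end

theory Submission
  imports Defs "HOL-Library.List_Lexorder"
begin


lemma mons_zero: "u \<in> mons n \<Longrightarrow> k \<notin> {1..n} \<Longrightarrow> u k = 0"
  by (simp add: mons_def)

lemma lq_criterion:
  assumes ws_mons: "set ws \<subseteq> mons n"
    and H: "\<And>i j. i < length ws \<Longrightarrow> j < i \<Longrightarrow>
        \<exists>p. (ws!i) p < (ws!j) p \<and> (\<exists>k<i. mdvd (ws!k) (mmul (var_mon p) (ws!i)))"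
    and i: "0 < i" "i < length ws"
  shows "generated_by_variables n (colon_mons n (ideal_mons n (set (take i ws))) (ws!i))"
proof -
  define w where "w = ws!i"
  have wm: "w \<in> mons n" using ws_mons i w_def by auto
  define V where "V = {p\<in>{1..n}. \<exists>k<i. mdvd (ws!k) (mmul (var_mon p) w)}"
  have "colon_mons n (ideal_mons n (set (take i ws))) w = ideal_mons n (var_mon ` V)"
  proof (rule set_eqI, rule iffI)
    fix x assume "x \<in> colon_mons n (ideal_mons n (set (take i ws))) w"
    then have xm: "x \<in> mons n" and "\<exists>g\<in>set (take i ws). mdvd g (mmul x w)"
      by (auto simp: colon_mons_def ideal_mons_def)
    then obtain j where j: "j < i" and gd: "mdvd (ws!j) (mmul x w)"
      using i by (auto simp: in_set_conv_nth)
    obtain p k where p: "w p < (ws!j) p" and k: "k < i" and kd: "mdvd (ws!k) (mmul (var_mon p) w)"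
      using H[OF i(2) j] w_def by blast
    have "ws!j \<in> mons n" using ws_mons j i by auto
    then have pn: "p \<in> {1..n}" using p by (metis mons_zero not_less_zero)
    have "(ws!j) p \<le> x p + w p" using gd by (simp add: mdvd_def mmul_def)
    then have "x p \<ge> 1" using p by arith
    then have "mdvd (var_mon p) x" unfolding mdvd_def var_mon_def by auto
    moreover have "p \<in> V" unfolding V_def using pn k kd by blast
    ultimately show "x \<in> ideal_mons n (var_mon ` V)"
      unfolding ideal_mons_def using xm by blast
  next
    fix x assume "x \<in> ideal_mons n (var_mon ` V)"
    then obtain p k where xm: "x \<in> mons n" and dp: "mdvd (var_mon p) x" and k: "k < i"
      and kd: "mdvd (ws!k) (mmul (var_mon p) w)"
      unfolding ideal_mons_def V_def by blast
    have "mdvd (ws!k) (mmul x w)" unfolding mdvd_def mmul_def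
    proof
      fix q
      have "(ws!k) q \<le> var_mon p q + w q" using kd by (simp add: mdvd_def mmul_def)
      moreover have "var_mon p q \<le> x q" using dp by (simp add: mdvd_def)
      ultimately show "(ws!k) q \<le> x q + w q" by linarith
    qed
    moreover have "ws!k \<in> set (take i ws)"
    proof -
      have "take i ws ! k = ws ! k" using k by simp
      moreover have "k < length (take i ws)" using k i by simp
      ultimately show ?thesis by (metis nth_mem)
    qed
    moreover have "mmul x w \<in> mons n" using xm wm by (simp add: mons_def mmul_def)
    ultimately show "x \<in> colon_mons n (ideal_mons n (set (take i ws))) w"
      using xm unfolding colon_mons_def ideal_mons_def by blast
  qed
  moreover have "V \<subseteq> {1..n}" unfolding V_def by blast
  ultimately have "\<exists>V\<subseteq>{1..n}. colon_mons n (ideal_mons n (set (take i ws))) w = ideal_mons n (var_mon ` V)"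
    by blast
  then show ?thesis unfolding generated_by_variables_def w_def by simp
qed

lemma mdvd_eq:
  assumes "g \<in> mons n" "u \<in> mons n" "mdvd g u" "(\<Sum>k\<in>{1..n}. g k) = (\<Sum>k\<in>{1..n}. u k)"
  shows "g = u"
proof (rule ccontr)
  assume "g \<noteq> u"
  then obtain k where k: "g k \<noteq> u k" by auto
  then have kn: "k \<in> {1..n}" using assms(1,2) mons_zero by metis
  have "(\<Sum>k\<in>{1..n}. g k) < (\<Sum>k\<in>{1..n}. u k)"
  proof (rule sum_strict_mono_ex1)
    show "\<forall>x\<in>{1..n}. g x \<le> u x" using assms(3) unfolding mdvd_def by blast
    have "g k < u k" using assms(3) k unfolding mdvd_def using le_neq_implies_less by blast
    then show "\<exists>a\<in>{1..n}. g a < u a" using kn by blast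
  qed simp
  then show False using assms(4) by simp
qed

lemma min_gens_ideal:
  assumes "M \<subseteq> mons n" "\<And>u. u \<in> M \<Longrightarrow> (\<Sum>k\<in>{1..n}. u k) = D"
  shows "min_gens (ideal_mons n M) = M"
proof (rule set_eqI, rule iffI)
  fix u assume "u \<in> min_gens (ideal_mons n M)"
  then have u: "u \<in> ideal_mons n M" and mn: "\<forall>v\<in>ideal_mons n M. mdvd v u \<longrightarrow> v = u"
    by (auto simp: min_gens_def)
  then obtain g where g: "g \<in> M" "mdvd g u" by (auto simp: ideal_mons_def)
  have "g \<in> ideal_mons n M" using g assms(1) by (auto simp: ideal_mons_def mdvd_def)
  then show "u \<in> M" using mn g by auto
next
  fix u assume u: "u \<in> M"
  have "u \<in> ideal_mons n M" using u assms(1) by (auto simp: ideal_mons_def mdvd_def)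
  moreover have "v = u" if vi: "v \<in> ideal_mons n M" and vu: "mdvd v u" for v
  proof -
    obtain g where g: "g \<in> M" "mdvd g v" and vm: "v \<in> mons n" using vi unfolding ideal_mons_def by blast
    have gu: "mdvd g u" using g(2) vu unfolding mdvd_def using order_trans by blast
    have "g = u" using mdvd_eq[OF _ _ gu] g(1) u assms by (metis subsetD)
    then have "mdvd u v" using g by simp
    show ?thesis
    proof (rule ext)
      fix k show "v k = u k" using \<open>mdvd u v\<close> vu unfolding mdvd_def by (metis antisym)
    qed
  qed
  ultimately show "u \<in> min_gens (ideal_mons n M)" by (auto simp: min_gens_def)
qed



locale pig =
  fixes n :: nat and E :: "nat set set" and l r :: "nat \<Rightarrow> real"
  assumes sg: "simple_graph n E"
  and lr: "\<forall>i\<in>{1..n}. l i \<le> r i"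
  and nc: "\<forall>i\<in>{1..n}. \<forall>j\<in>{1..n}. \<not> ({l i..r i} \<subset> {l j..r j})"
  and adj: "\<forall>i\<in>{1..n}. \<forall>j\<in>{1..n}. i \<noteq> j \<longrightarrow> ({i, j} \<in> E \<longleftrightarrow> {l i..r i} \<inter> {l j..r j} \<noteq> {})"
begin

definition L where "L = sort_key l [1..<Suc n]"

lemma L_len: "length L = n" by (simp add: L_def)
lemma L_dist: "distinct L" by (simp add: L_def)
lemma L_set: "set L = {1..n}" by (auto simp: L_def)
lemma L_sorted: "sorted (map l L)" by (simp add: L_def)

lemma L_in: "q < n \<Longrightarrow> L!q \<in> {1..n}"
  using nth_mem[of q L] L_len L_set by simp

lemma L_inj: "q < n \<Longrightarrow> q' < n \<Longrightarrow> L!q = L!q' \<longleftrightarrow> q = q'"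
  using L_dist L_len nth_eq_iff_index_eq by metis

lemma L_mono_l: "a \<le> b \<Longrightarrow> b < n \<Longrightarrow> l (L!a) \<le> l (L!b)"
  using sorted_nth_mono[OF L_sorted, of a b] L_len by simp

lemma L_mono_r: assumes "a \<le> b" "b < n" shows "r (L!a) \<le> r (L!b)"
proof (rule ccontr)
  assume "\<not> r (L!a) \<le> r (L!b)"
  then have rr: "r (L!b) < r (L!a)" by simp
  have ll: "l (L!a) \<le> l (L!b)" using L_mono_l assms by blast
  have inb: "L!b \<in> {1..n}" "L!a \<in> {1..n}" using L_in assms by auto
  have "l (L!b) \<le> r (L!b)" using lr inb by blast
  have "{l (L!b)..r (L!b)} \<subset> {l (L!a)..r (L!a)}"
  proof
    show "{l (L!b)..r (L!b)} \<subseteq> {l (L!a)..r (L!a)}" using ll rr by auto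
    show "{l (L!b)..r (L!b)} \<noteq> {l (L!a)..r (L!a)}"
    proof
      assume "{l (L!b)..r (L!b)} = {l (L!a)..r (L!a)}"
      moreover have "r (L!a) \<in> {l (L!a)..r (L!a)}" using \<open>l (L!b) \<le> r (L!b)\<close> ll rr by auto
      ultimately show False using rr by auto
    qed
  qed
  then show False using nc inb by blast
qed

lemma sum_pos: "(\<Sum>i\<in>{1..n}. u i) = (\<Sum>q<n. u (L!q))"
proof -
  have "bij_betw ((!) L) {..<n} {1..n}" using bij_betw_nth[OF L_dist] L_len L_set by simp
  then show ?thesis using sum.reindex_bij_betw[of "(!) L" "{..<n}" "{1..n}" u] by simp
qed

definition clq :: "real \<Rightarrow> nat set" where
  "clq p = {i\<in>{1..n}. l i \<le> p \<and> p \<le> r i}"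

definition pclq :: "real \<Rightarrow> nat set" where
  "pclq p = {q. q < n \<and> l (L!q) \<le> p \<and> p \<le> r (L!q)}"

definition load :: "(nat \<Rightarrow> nat) \<Rightarrow> real \<Rightarrow> nat" where
  "load u p = (\<Sum>i\<in>clq p. u i)"

lemma fin_clq: "finite (clq p)" by (simp add: clq_def)
lemma fin_pclq: "finite (pclq p)" by (simp add: pclq_def)

lemma load_pos: "load u p = (\<Sum>q\<in>pclq p. u (L!q))"
proof -
  have inj: "inj_on ((!) L) (pclq p)"
    by (rule inj_on_nth[OF L_dist]) (auto simp: pclq_def L_len)
  have img: "(!) L ` pclq p = clq p"
  proof
    show "(!) L ` pclq p \<subseteq> clq p" using L_in by (auto simp: pclq_def clq_def)
    show "clq p \<subseteq> (!) L ` pclq p"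
    proof
      fix i assume "i \<in> clq p"
      then have "i \<in> set L" "l i \<le> p" "p \<le> r i" using L_set by (auto simp: clq_def)
      then obtain q where "q < n" "L!q = i" using L_len by (metis in_set_conv_nth)
      then show "i \<in> (!) L ` pclq p" using \<open>l i \<le> p\<close> \<open>p \<le> r i\<close> by (auto simp: pclq_def)
    qed
  qed
  show ?thesis unfolding load_def using sum.reindex[OF inj, of u] img by simp
qed

definition Bset :: "nat \<Rightarrow> nat \<Rightarrow> (nat \<Rightarrow> nat) set" where
  "Bset d t = {u \<in> mons n. (\<Sum>i\<in>{1..n}. u i) = d * t \<and> (\<forall>p. load u p \<le> d)}"

lemma load_mmul: "load (mmul g h) p = load g p + load h p"
  unfolding load_def mmul_def by (simp add: sum.distrib)

lemma sqfree_props: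
  assumes "independent_set n E S"
  shows "sqfree_mon S \<in> mons n" "(\<Sum>i\<in>{1..n}. sqfree_mon S i) = card S" "load (sqfree_mon S) p \<le> 1"
proof -
  have Sn: "S \<subseteq> {1..n}" using assms by (simp add: independent_set_def)
  show "sqfree_mon S \<in> mons n" using Sn by (auto simp: mons_def sqfree_mon_def)
  have "(\<Sum>i\<in>{1..n}. sqfree_mon S i) = card ({1..n} \<inter> S)"
    unfolding sqfree_mon_def by (simp add: sum.If_cases)
  then show "(\<Sum>i\<in>{1..n}. sqfree_mon S i) = card S" using Sn by (simp add: Int_absorb1)
  have "load (sqfree_mon S) p = card (clq p \<inter> S)"
    unfolding load_def sqfree_mon_def using fin_clq by (simp add: sum.If_cases)
  moreover have "card (clq p \<inter> S) \<le> 1"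
  proof -
    have "a = b" if "a \<in> clq p \<inter> S" "b \<in> clq p \<inter> S" for a b
    proof (rule ccontr)
      assume "a \<noteq> b"
      have "p \<in> {l a..r a} \<inter> {l b..r b}" using that by (auto simp: clq_def)
      then have "{a, b} \<in> E" using adj that \<open>a \<noteq> b\<close> by (auto simp: clq_def)
      moreover have "\<forall>i\<in>S. \<forall>j\<in>S. {i, j} \<notin> E" using assms by (simp add: independent_set_def)
      moreover have "a \<in> S" "b \<in> S" using that by auto
      ultimately show False by blast
    qed
    then show ?thesis using fin_clq card_le_Suc0_iff_eq[of "clq p \<inter> S"] by auto
  qed
  ultimately show "load (sqfree_mon S) p \<le> 1" by simp
qed

lemma pow_sub: "pow_gens (It_gens n E t) d \<subseteq> Bset d t"
proof (induction d)
  case 0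
  have "(\<lambda>k. 0::nat) \<in> Bset 0 t" by (simp add: Bset_def mons_def load_def)
  then show ?case by simp
next
  case (Suc d)
  show ?case
  proof
    fix u assume "u \<in> pow_gens (It_gens n E t) (Suc d)"
    then obtain g h where u: "u = mmul g h" and g: "g \<in> It_gens n E t" and h: "h \<in> pow_gens (It_gens n E t) d"
      unfolding pow_gens.simps by blast
    obtain S where S: "g = sqfree_mon S" "independent_set n E S" "card S = t"
      using g unfolding It_gens_def by blast
    have hB: "h \<in> Bset d t" using h Suc.IH by blast
    have "g \<in> mons n" "h \<in> mons n" using sqfree_props(1)[OF S(2)] hB S(1) by (auto simp: Bset_def)
    then have "u \<in> mons n" using u unfolding mons_def mmul_def by simp
    moreover have "(\<Sum>i\<in>{1..n}. u i) = Suc d * t"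
    proof -
      have "(\<Sum>i\<in>{1..n}. h i) = d * t" using hB by (simp add: Bset_def)
      moreover have "(\<Sum>i\<in>{1..n}. g i) = t" using sqfree_props(2)[OF S(2)] S(1,3) by simp
      ultimately show ?thesis unfolding u mmul_def sum.distrib by simp
    qed
    moreover have "load u p \<le> Suc d" for p
    proof -
      have "load h p \<le> d" using hB by (simp add: Bset_def)
      then show ?thesis using sqfree_props(3)[OF S(2), of p] S u load_mmul[of g h p] by simp
    qed
    ultimately show "u \<in> Bset (Suc d) t" by (simp add: Bset_def)
  qed
qed

end



lemma telescope_nat:
  fixes g :: "nat \<Rightarrow> nat"
  assumes "\<forall>q<N. g q \<le> g (Suc q)"
  shows "(\<Sum>q<N. g (Suc q) - g q) + g 0 = g N"
  using assms
proof (induction N)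
  case 0 then show ?case by simp
next
  case (Suc N)
  then have IH: "(\<Sum>q<N. g (Suc q) - g q) + g 0 = g N" by simp
  have "g N \<le> g (Suc N)" using Suc.prems by simp
  then show ?case using IH by simp
qed

lemma noinc_nat:
  fixes g :: "nat \<Rightarrow> nat"
  assumes "a \<le> b" "\<forall>q. a \<le> q \<and> q < b \<longrightarrow> g (Suc q) \<le> g q"
  shows "g b \<le> g a"
  using assms
proof (induction b)
  case 0 then show ?case by simp
next
  case (Suc b)
  show ?case
  proof (cases "a \<le> b")
    case True
    then have "g b \<le> g a" using Suc by simp
    moreover have "g (Suc b) \<le> g b" using Suc.prems True by simp
    ultimately show ?thesis by simp
  next
    case False
    then have "a = Suc b" using Suc.prems by simp
    then show ?thesis by simp
  qed
qed

context pig
begin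

lemma peel:
  assumes uB: "u \<in> Bset (Suc d) t"
  shows "\<exists>S. independent_set n E S \<and> card S = t \<and> (\<forall>i. sqfree_mon S i \<le> u i)
           \<and> (\<lambda>i. u i - sqfree_mon S i) \<in> Bset d t"
proof -
  define U where "U q = u (L!q)" for q
  define c where "c k = (\<Sum>q\<in>{0..<k}. U q)" for k
  define f where "f x = (x + d) div Suc d" for x
  define Q where "Q = {q. q < n \<and> f (c q) < f (c (Suc q))}"
  define S where "S = (!) L ` Q"
  have um: "u \<in> mons n" and usum: "(\<Sum>i\<in>{1..n}. u i) = Suc d * t"
    and uload: "\<And>p. load u p \<le> Suc d"
    using uB by (auto simp: Bset_def)
  have cSuc: "c (Suc q) = c q + U q" for q by (simp add: c_def)
  have cn: "c n = Suc d * t"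
    using usum sum_pos[of u] by (simp add: c_def U_def atLeast0LessThan)
  have Ule: "U q \<le> Suc d" if "q < n" for q
  proof -
    have inl: "L!q \<in> {1..n}" using L_in that by blast
    then have "L!q \<in> clq (l (L!q))" using lr by (auto simp: clq_def)
    then have "u (L!q) \<le> load u (l (L!q))"
      unfolding load_def using member_le_sum[of "L!q" "clq (l (L!q))" u] fin_clq by simp
    then show ?thesis using uload[of "l (L!q)"] by (simp add: U_def)
  qed
  have fmono: "x \<le> y \<Longrightarrow> f x \<le> f y" for x y by (simp add: f_def div_le_mono)
  have fstep: "f (x + Suc d) = Suc (f x)" for x
  proof -
    have "f (x + Suc d) = (x + d + Suc d) div Suc d" by (simp add: f_def algebra_simps)
    also have "\<dots> = (x + d) div Suc d + 1" by (rule div_add_self2) simp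
    finally show ?thesis by (simp add: f_def)
  qed
  have fle: "y \<le> x + Suc d \<Longrightarrow> f y \<le> Suc (f x)" for x y
    using fmono[of y "x + Suc d"] fstep[of x] by simp
  have f0: "f 0 = 0" by (simp add: f_def)
  have fnt: "f (Suc d * t) = t"
  proof -
    have "f (Suc d * t) = (d + t * Suc d) div Suc d" by (simp add: f_def algebra_simps)
    also have "\<dots> = t + d div Suc d" by (rule div_mult_self1) simp
    finally show ?thesis by simp
  qed
  have cdiff: "c q' = c q + (\<Sum>x\<in>{q..<q'}. U x)" if "q \<le> q'" for q q'
    unfolding c_def using sum.atLeastLessThan_concat[of 0 q q' U] that by simp
  have cmono: "c q \<le> c q'" if "q \<le> q'" for q q' using cdiff[OF that] by simp
  have Qn: "Q \<subseteq> {..<n}" by (auto simp: Q_def)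
  have finQ: "finite Q" using Qn finite_subset by blast
  have QU: "U q \<ge> 1" if "q \<in> Q" for q
  proof (rule ccontr)
    assume "\<not> U q \<ge> 1"
    then have "c (Suc q) = c q" using cSuc by simp
    then show False using that by (simp add: Q_def)
  qed
  have cardQ: "card Q = t"
  proof -
    have hterm: "(if q \<in> Q then 1 else 0) = f (c (Suc q)) - f (c q)" if "q < n" for q
    proof -
      have "f (c (Suc q)) \<le> Suc (f (c q))" using fle cSuc Ule[OF that] by simp
      moreover have "f (c q) \<le> f (c (Suc q))" using fmono cSuc by simp
      ultimately show ?thesis using that by (auto simp: Q_def)
    qed
    have "card Q = (\<Sum>q<n. if q \<in> Q then 1 else 0)"
    proof -
      have "(\<Sum>q<n. if q \<in> Q then 1 else (0::nat)) = card ({..<n} \<inter> Q)"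
        by (simp add: sum.If_cases)
      then show ?thesis using Qn by (simp add: Int_absorb1)
    qed
    also have "\<dots> = (\<Sum>q<n. f (c (Suc q)) - f (c q))" using hterm by simp
    also have "\<dots> = f (c n) - f (c 0)"
    proof -
      have "\<forall>q<n. f (c q) \<le> f (c (Suc q))" using fmono cSuc by simp
      from telescope_nat[OF this] show ?thesis by simp
    qed
    also have "\<dots> = t" using cn fnt f0 by (simp add: c_def)
    finally show ?thesis .
  qed
  have injQ: "inj_on ((!) L) Q" by (rule inj_on_nth[OF L_dist]) (use Qn L_len in auto)
  have cardS: "card S = t" using cardQ injQ by (simp add: S_def card_image)
  have Sn: "S \<subseteq> {1..n}" using Qn L_in by (auto simp: S_def)
  have sqle: "sqfree_mon S i \<le> u i" for i
  proof (cases "i \<in> S")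
    case True
    then obtain q where "q \<in> Q" "i = L!q" by (auto simp: S_def)
    then show ?thesis using QU by (auto simp: sqfree_mon_def U_def)
  next
    case False then show ?thesis by (simp add: sqfree_mon_def)
  qed
  have disj: "{l (L!q)..r (L!q)} \<inter> {l (L!q')..r (L!q')} = {}" if "q \<in> Q" "q' \<in> Q" "q < q'" for q q'
  proof (rule ccontr)
    assume "{l (L!q)..r (L!q)} \<inter> {l (L!q')..r (L!q')} \<noteq> {}"
    then obtain x where x: "l (L!q') \<le> x" "x \<le> r (L!q)" by auto
    have q'n: "q' < n" using that Qn by auto
    define p where "p = r (L!q)"
    have sub: "{q..<Suc q'} \<subseteq> pclq p"
    proof
      fix z assume "z \<in> {q..<Suc q'}"
      then have z: "q \<le> z" "z \<le> q'" by auto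
      have "l (L!z) \<le> l (L!q')" using L_mono_l z q'n by simp
      moreover have "r (L!q) \<le> r (L!z)" using L_mono_r z q'n by simp
      ultimately show "z \<in> pclq p" using z q'n x by (auto simp: pclq_def p_def)
    qed
    have "(\<Sum>z\<in>{q..<Suc q'}. U z) \<le> (\<Sum>z\<in>pclq p. U z)"
      by (rule sum_mono2[OF fin_pclq sub]) simp
    also have "\<dots> = load u p" using load_pos[of u p] by (simp add: U_def)
    also have "\<dots> \<le> Suc d" by (rule uload)
    finally have "c (Suc q') \<le> c q + Suc d" using cdiff[of q "Suc q'"] that by simp
    then have A: "f (c (Suc q')) \<le> Suc (f (c q))" using fle by simp
    have "f (c q) < f (c (Suc q))" "f (c q') < f (c (Suc q'))" using that by (auto simp: Q_def)
    moreover have "f (c (Suc q)) \<le> f (c q')" using that cmono fmono by simp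
    ultimately show False using A by simp
  qed
  have indep: "independent_set n E S"
    unfolding independent_set_def
  proof (intro conjI ballI)
    show "S \<subseteq> {1..n}" by (rule Sn)
    fix a b assume ab: "a \<in> S" "b \<in> S"
    show "{a, b} \<notin> E"
    proof
      assume abE: "{a, b} \<in> E"
      show False
      proof (cases "a = b")
        case True
        then have "card {a, b} = 1" by simp
        then show False using sg abE by (auto simp: simple_graph_def)
      next
        case False
        obtain q q' where qq: "q \<in> Q" "q' \<in> Q" "a = L!q" "b = L!q'" using ab by (auto simp: S_def)
        have "q \<noteq> q'" using qq False by auto
        have an: "a \<in> {1..n}" "b \<in> {1..n}" using ab Sn by auto
        have "{l a..r a} \<inter> {l b..r b} = {}"
        proof (cases "q < q'")
          case True then show ?thesis using disj qq by simp
        next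
          case False
          then have "q' < q" using \<open>q \<noteq> q'\<close> by simp
          then show ?thesis using disj[of q' q] qq by (simp add: Int_commute)
        qed
        then show False using adj an abE \<open>a \<noteq> b\<close> by blast
      qed
    qed
  qed
  define u' where "u' i = u i - sqfree_mon S i" for i
  have u'm: "u' \<in> mons n" using um by (simp add: mons_def u'_def)
  have split: "u' i + sqfree_mon S i = u i" for i using sqle[of i] by (simp add: u'_def)
  have "(\<Sum>i\<in>{1..n}. u' i) + (\<Sum>i\<in>{1..n}. sqfree_mon S i) = (\<Sum>i\<in>{1..n}. u i)"
    by (simp add: sum.distrib[symmetric] split)
  then have u'sum: "(\<Sum>i\<in>{1..n}. u' i) = d * t"
    using sqfree_props(2)[OF indep] cardS usum by simp
  have loadsplit: "load u' p + load (sqfree_mon S) p = load u p" for p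
    unfolding load_def by (simp add: sum.distrib[symmetric] split)
  have u'load: "load u' p \<le> d" for p
  proof (cases "load u p \<le> d")
    case True then show ?thesis using loadsplit[of p] by simp
  next
    case False
    then have full: "load u p = Suc d" using uload[of p] by simp
    define P where "P = pclq p"
    have sumP: "(\<Sum>q\<in>P. U q) = Suc d" using full load_pos[of u p] by (simp add: P_def U_def)
    have finP: "finite P" by (simp add: P_def fin_pclq)
    have Pne: "P \<noteq> {}" using sumP by auto
    define q1 where "q1 = Min P"
    define q2 where "q2 = Max P"
    have q1P: "q1 \<in> P" and q2P: "q2 \<in> P" using finP Pne by (simp_all add: q1_def q2_def)
    have q12: "q1 \<le> q2" using finP q1P q2P by (simp add: q1_def q2_def)
    have q2n: "q2 < n" using q2P by (simp add: P_def pclq_def)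
    have Peq: "P = {q1..<Suc q2}"
    proof
      show "P \<subseteq> {q1..<Suc q2}"
      proof
        fix z assume "z \<in> P"
        then have "q1 \<le> z" "z \<le> q2" using finP by (simp_all add: q1_def q2_def)
        then show "z \<in> {q1..<Suc q2}" by simp
      qed
      show "{q1..<Suc q2} \<subseteq> P"
      proof
        fix z assume "z \<in> {q1..<Suc q2}"
        then have z: "q1 \<le> z" "z \<le> q2" by auto
        have "l (L!z) \<le> l (L!q2)" using L_mono_l z q2n by simp
        moreover have "r (L!q1) \<le> r (L!z)" using L_mono_r z q2n by simp
        moreover have "l (L!q2) \<le> p" using q2P by (simp add: P_def pclq_def)
        moreover have "p \<le> r (L!q1)" using q1P by (simp add: P_def pclq_def)
        ultimately show "z \<in> P" using z q2n by (simp add: P_def pclq_def)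
      qed
    qed
    have "c (Suc q2) = c q1 + Suc d" using cdiff[of q1 "Suc q2"] q12 sumP Peq by simp
    then have fq: "f (c (Suc q2)) = Suc (f (c q1))" using fstep by simp
    have "\<exists>q\<in>P. q \<in> Q"
    proof (rule ccontr)
      assume "\<not> (\<exists>q\<in>P. q \<in> Q)"
      then have "\<forall>q. q1 \<le> q \<and> q < Suc q2 \<longrightarrow> f (c (Suc q)) \<le> f (c q)"
        using Peq q2n by (auto simp: Q_def not_less)
      from noinc_nat[of q1 "Suc q2" "\<lambda>q. f (c q)", OF _ this] q12
      have "f (c (Suc q2)) \<le> f (c q1)" by simp
      then show False using fq by simp
    qed
    then obtain q where qP: "q \<in> P" and qQ: "q \<in> Q" by blast
    have "L!q \<in> clq p" using qP L_in by (auto simp: P_def pclq_def clq_def)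
    moreover have "L!q \<in> S" using qQ by (simp add: S_def)
    ultimately have "sqfree_mon S (L!q) \<le> load (sqfree_mon S) p"
      unfolding load_def using member_le_sum[of "L!q" "clq p" "sqfree_mon S"] fin_clq by simp
    then have "load (sqfree_mon S) p \<ge> 1" using \<open>L!q \<in> S\<close> by (simp add: sqfree_mon_def)
    then show ?thesis using loadsplit[of p] full by simp
  qed
  have "u' \<in> Bset d t" using u'm u'sum u'load by (simp add: Bset_def)
  then show ?thesis using indep cardS sqle unfolding u'_def by blast
qed

lemma Bset_sub: "Bset d t \<subseteq> pow_gens (It_gens n E t) d"
proof (induction d)
  case 0
  show ?case
  proof
    fix u assume "u \<in> Bset 0 t"
    then have um: "u \<in> mons n" and "(\<Sum>i\<in>{1..n}. u i) = 0" by (auto simp: Bset_def)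
    then have "\<forall>i\<in>{1..n}. u i = 0" by simp
    then have "u = (\<lambda>k. 0)" using um mons_zero[OF um] by (metis ext)
    then show "u \<in> pow_gens (It_gens n E t) 0" by simp
  qed
next
  case (Suc d)
  show ?case
  proof
    fix u assume "u \<in> Bset (Suc d) t"
    from peel[OF this] obtain S where S: "independent_set n E S" "card S = t"
      "\<forall>i. sqfree_mon S i \<le> u i" "(\<lambda>i. u i - sqfree_mon S i) \<in> Bset d t" by blast
    have "u = mmul (sqfree_mon S) (\<lambda>i. u i - sqfree_mon S i)"
      using S(3) by (simp add: mmul_def)
    moreover have "sqfree_mon S \<in> It_gens n E t" using S(1,2) by (auto simp: It_gens_def)
    moreover have "(\<lambda>i. u i - sqfree_mon S i) \<in> pow_gens (It_gens n E t) d" using S(4) Suc.IH by blast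
    ultimately show "u \<in> pow_gens (It_gens n E t) (Suc d)" by auto
  qed
qed

lemma pow_eq: "pow_gens (It_gens n E t) d = Bset d t"
  using pow_sub Bset_sub by blast

end



lemma finite_pow_gens: "finite Gs \<Longrightarrow> finite (pow_gens Gs d)"
proof (induction d)
  case 0 then show ?case by simp
next
  case (Suc d)
  have "pow_gens Gs (Suc d) = (\<lambda>(g, h). mmul g h) ` (Gs \<times> pow_gens Gs d)" by auto
  then show ?case using Suc by simp
qed

lemma finite_It_gens: "finite (It_gens n E t)"
proof -
  have "It_gens n E t \<subseteq> sqfree_mon ` Pow {1..n}"
    by (auto simp: It_gens_def independent_set_def)
  then show ?thesis by (rule finite_subset) simp
qed

context pig
begin

definition key :: "(nat \<Rightarrow> nat) \<Rightarrow> nat list" where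
  "key u = map u L"

lemma key_len: "length (key u) = n" by (simp add: key_def L_len)
lemma key_nth: "q < n \<Longrightarrow> key u ! q = u (L!q)" by (simp add: key_def L_len)

lemma key_inj: assumes "u \<in> mons n" "v \<in> mons n" "key u = key v" shows "u = v"
proof (rule ext)
  fix i show "u i = v i"
  proof (cases "i \<in> {1..n}")
    case True
    then obtain q where "q < n" "L!q = i" using L_set L_len by (metis in_set_conv_nth)
    then show ?thesis using assms(3) key_nth by metis
  next
    case False then show ?thesis using assms(1,2) mons_zero by metis
  qed
qed

lemma var_sum: "(\<Sum>i\<in>A. var_mon x i) = (if x \<in> A then 1 else 0)" if "finite A"
  unfolding var_mon_def using that by (simp add: sum.delta')

lemma exch:
  assumes uB: "u \<in> Bset m t" and vB: "v \<in> Bset m t" and lt: "key u < key v"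
  shows "\<exists>p. u p < v p \<and> (\<exists>w\<in>Bset m t. key u < key w \<and> mdvd w (mmul (var_mon p) u))"
proof -
  have "(key u, key v) \<in> lexord {(a, b). a < b}" using lt by (simp add: list_less_def)
  then obtain q where q: "q < n" "take q (key u) = take q (key v)" "key u ! q < key v ! q"
    unfolding lexord_take_index_conv by (auto simp: key_len)
  have before: "u (L!q') = v (L!q')" if "q' < q" for q'
  proof -
    have "take q (key u) ! q' = take q (key v) ! q'" using q(2) by simp
    then show ?thesis using that q(1) key_nth by simp
  qed
  define j where "j = L!q"
  have ujv: "u j < v j" using q key_nth by (simp add: j_def)
  have jn: "j \<in> {1..n}" using L_in q(1) by (simp add: j_def)
  have um: "u \<in> mons n" and usum: "(\<Sum>i\<in>{1..n}. u i) = m * t" and uload: "\<And>p. load u p \<le> m"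
    using uB by (auto simp: Bset_def)
  have vsum: "(\<Sum>i\<in>{1..n}. v i) = m * t" and vload: "\<And>p. load v p \<le> m"
    using vB by (auto simp: Bset_def)
  have ex: "\<exists>q2. q2 < n \<and> v (L!q2) < u (L!q2)"
  proof (rule ccontr)
    assume na: "\<not> ?thesis"
    have "\<forall>x\<in>{..<n}. u (L!x) \<le> v (L!x)"
    proof
      fix x assume "x \<in> {..<n}"
      then have "x < n" by simp
      then show "u (L!x) \<le> v (L!x)" using na by (metis not_less)
    qed
    moreover have "\<exists>a\<in>{..<n}. u (L!a) < v (L!a)" using q ujv by (auto simp: j_def)
    ultimately have "(\<Sum>x<n. u (L!x)) < (\<Sum>x<n. v (L!x))"
      by (intro sum_strict_mono_ex1) auto
    then show False using usum vsum sum_pos[of u] sum_pos[of v] by simp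
  qed
  define qk where "qk = (LEAST q2. q2 < n \<and> v (L!q2) < u (L!q2))"
  have qk: "qk < n" "v (L!qk) < u (L!qk)"
    using LeastI_ex[OF ex] by (simp_all add: qk_def)
  have minqk: "u (L!q') \<le> v (L!q')" if "q' < qk" "q' < n" for q'
    using not_less_Least[of q' "\<lambda>q2. q2 < n \<and> v (L!q2) < u (L!q2)"] that by (auto simp: qk_def)
  have qqk: "q < qk"
  proof (rule ccontr)
    assume "\<not> q < qk"
    then have "qk \<le> q" by simp
    moreover have "qk \<noteq> q" using qk ujv by (auto simp: j_def)
    ultimately have "qk < q" by simp
    then show False using before qk by simp
  qed
  define k where "k = L!qk"
  have kn: "k \<in> {1..n}" using L_in qk by (simp add: k_def)
  have jk: "j \<noteq> k" using L_inj qqk q(1) qk(1) by (simp add: j_def k_def)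
  have uk: "u k \<ge> 1" using qk by (simp add: k_def)
  define w where "w i = (if i = j then Suc (u i) else if i = k then u i - 1 else u i)" for i
  have wpt: "w i + var_mon k i = u i + var_mon j i" for i
    using uk jk by (auto simp: w_def var_mon_def)
  have wm: "w \<in> mons n"
    unfolding mons_def
  proof (intro CollectI allI impI)
    fix i assume "i \<notin> {1..n}"
    then have "i \<noteq> j" "i \<noteq> k" "u i = 0" using jn kn mons_zero[OF um] by auto
    then show "w i = 0" by (simp add: w_def)
  qed
  have "(\<Sum>i\<in>{1..n}. w i) + (\<Sum>i\<in>{1..n}. var_mon k i) = (\<Sum>i\<in>{1..n}. u i) + (\<Sum>i\<in>{1..n}. var_mon j i)"
    by (simp add: sum.distrib[symmetric] wpt)
  then have wsum: "(\<Sum>i\<in>{1..n}. w i) = m * t" using var_sum jn kn usum by simp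
  have loadeq: "load w p + (if k \<in> clq p then 1 else 0) = load u p + (if j \<in> clq p then 1 else 0)" for p
  proof -
    have "load w p + (\<Sum>i\<in>clq p. var_mon k i) = load u p + (\<Sum>i\<in>clq p. var_mon j i)"
      unfolding load_def by (simp add: sum.distrib[symmetric] wpt)
    then show ?thesis using var_sum[OF fin_clq] by simp
  qed
  have wload: "load w p \<le> m" for p
  proof (cases "j \<in> clq p")
    case False
    then show ?thesis using loadeq[of p] uload[of p] by (simp split: if_splits)
  next
    case jin: True
    show ?thesis
    proof (cases "k \<in> clq p")
      case True
      then show ?thesis using loadeq[of p] uload[of p] jin by simp
    next
      case kout: False
      have "load u p < load v p"
      proof -
        have "\<forall>x\<in>pclq p. u (L!x) \<le> v (L!x)"
        proof
          fix x assume xP: "x \<in> pclq p"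
          then have xn: "x < n" and xl: "l (L!x) \<le> p" and xr: "p \<le> r (L!x)" by (auto simp: pclq_def)
          have "x < qk"
          proof (rule ccontr)
            assume "\<not> x < qk"
            then have "qk \<le> x" by simp
            then have "l k \<le> l (L!x)" using L_mono_l xn by (simp add: k_def)
            moreover have "r j \<le> r k" using L_mono_r qqk qk(1) by (simp add: j_def k_def)
            moreover have "p \<le> r j" using jin by (simp add: clq_def)
            ultimately have "k \<in> clq p" using kn xl by (auto simp: clq_def)
            then show False using kout by simp
          qed
          then show "u (L!x) \<le> v (L!x)" using minqk xn by simp
        qed
        moreover have "q \<in> pclq p" using jin q(1) by (simp add: clq_def pclq_def j_def)
        ultimately have "(\<Sum>x\<in>pclq p. u (L!x)) < (\<Sum>x\<in>pclq p. v (L!x))"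
          using ujv fin_pclq by (intro sum_strict_mono_ex1) (auto simp: j_def)
        then show ?thesis using load_pos[of u p] load_pos[of v p] by simp
      qed
      then show ?thesis using loadeq[of p] vload[of p] jin kout by simp
    qed
  qed
  have wB: "w \<in> Bset m t" using wm wsum wload by (simp add: Bset_def)
  have "key u < key w"
  proof -
    have "take q (key u) = take q (key w)"
    proof (rule nth_equalityI)
      show "length (take q (key u)) = length (take q (key w))" by (simp add: key_len)
      fix i assume "i < length (take q (key u))"
      then have i: "i < q" by (simp add: key_len)
      then have "L!i \<noteq> j" "L!i \<noteq> k" using L_inj q(1) qqk qk(1)
        by (simp_all add: j_def k_def)
      then show "take q (key u) ! i = take q (key w) ! i"
        using i q(1) key_nth by (simp add: w_def)
    qed
    moreover have "key u ! q < key w ! q" using q(1) key_nth by (simp add: w_def j_def)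
    ultimately have "(key u, key w) \<in> lexord {(a, b). a < b}"
      unfolding lexord_take_index_conv using q(1) by (auto simp: key_len)
    then show ?thesis by (simp add: list_less_def)
  qed
  moreover have "mdvd w (mmul (var_mon j) u)"
    unfolding mdvd_def mmul_def using wpt by (metis add.commute le_add1 le_trans add_le_cancel_right nat_le_linear)
  ultimately show ?thesis using ujv wB by blast
qed

end



theorem theorem2p7:
  fixes n t m :: nat and E :: "nat set set"
  assumes "proper_interval_graph n E" and "t \<ge> 2" and "m \<ge> 1"
  shows "has_linear_quotients n (ideal_mons n (pow_gens (It_gens n E t) m))"
proof -
  obtain l r :: "nat \<Rightarrow> real" where sg: "simple_graph n E"
    and lr: "\<forall>i\<in>{1..n}. l i \<le> r i"
    and nc: "\<forall>i\<in>{1..n}. \<forall>j\<in>{1..n}. \<not> ({l i..r i} \<subset> {l j..r j})"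
    and adj: "\<forall>i\<in>{1..n}. \<forall>j\<in>{1..n}. i \<noteq> j \<longrightarrow> ({i, j} \<in> E \<longleftrightarrow> {l i..r i} \<inter> {l j..r j} \<noteq> {})"
    using assms(1) unfolding proper_interval_graph_def by blast
  interpret pig n E l r using sg lr nc adj by unfold_locales
  define M where "M = pow_gens (It_gens n E t) m"
  have MB: "M = Bset m t" using pow_eq by (simp add: M_def)
  have Mm: "M \<subseteq> mons n" using MB by (auto simp: Bset_def)
  have Msum: "\<And>u. u \<in> M \<Longrightarrow> (\<Sum>k\<in>{1..n}. u k) = m * t" using MB by (auto simp: Bset_def)
  have mg: "min_gens (ideal_mons n M) = M" by (rule min_gens_ideal[OF Mm Msum])
  have finM: "finite M" unfolding M_def by (rule finite_pow_gens[OF finite_It_gens])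
  obtain xs where xs: "set xs = M" "distinct xs" using finite_distinct_list[OF finM] by blast
  define ws where "ws = rev (sort_key key xs)"
  have wsd: "distinct ws" using xs by (simp add: ws_def)
  have wss: "set ws = M" using xs by (simp add: ws_def)
  have "sorted_wrt (\<le>) (map key (sort_key key xs))" by (rule sorted_sort_key)
  then have "sorted_wrt (\<lambda>a b. key b \<le> key a) ws"
    by (simp add: ws_def sorted_wrt_rev sorted_wrt_map)
  then have srt: "\<And>a b. a < b \<Longrightarrow> b < length ws \<Longrightarrow> key (ws!b) \<le> key (ws!a)"
    by (simp add: sorted_wrt_iff_nth_less)
  have wsM: "\<And>a. a < length ws \<Longrightarrow> ws!a \<in> M" using wss nth_mem by blast
  have strict: "key (ws!b) < key (ws!a)" if "a < b" "b < length ws" for a b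
  proof -
    have "ws!a \<noteq> ws!b" using wsd that nth_eq_iff_index_eq by fastforce
    then have "key (ws!a) \<noteq> key (ws!b)" using key_inj wsM Mm that by (meson less_trans subsetD)
    then show ?thesis using srt[OF that] by simp
  qed
  have H: "\<exists>p. (ws!i) p < (ws!j) p \<and> (\<exists>k<i. mdvd (ws!k) (mmul (var_mon p) (ws!i)))"
    if i: "i < length ws" and j: "j < i" for i j
  proof -
    have uB: "ws!i \<in> Bset m t" and vB: "ws!j \<in> Bset m t" using wsM MB i j by auto
    have "key (ws!i) < key (ws!j)" using strict j i by simp
    from exch[OF uB vB this] obtain p w where p: "(ws!i) p < (ws!j) p" and wB: "w \<in> Bset m t"
      and kw: "key (ws!i) < key w" and dv: "mdvd w (mmul (var_mon p) (ws!i))" by blast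
    have "w \<in> set ws" using wB MB wss by simp
    then obtain k where k: "k < length ws" "ws!k = w" by (metis in_set_conv_nth)
    have "k < i"
    proof (rule ccontr)
      assume "\<not> k < i"
      then have "i = k \<or> i < k" by auto
      then show False
      proof
        assume "i = k" then show False using kw k by simp
      next
        assume "i < k" then show False using srt[OF _ k(1), of i] kw k by simp
      qed
    qed
    then show ?thesis using p dv k by blast
  qed
  have "\<forall>i. 0 < i \<and> i < length ws \<longrightarrow>
           generated_by_variables n (colon_mons n (ideal_mons n (set (take i ws))) (ws ! i))"
  proof (intro allI impI)
    fix i assume "0 < i \<and> i < length ws"
    then show "generated_by_variables n (colon_mons n (ideal_mons n (set (take i ws))) (ws ! i))"
      using lq_criterion[of ws n i] H wss Mm by blast
  qed
  then show ?thesis unfolding has_linear_quotients_def M_def[symmetric] mg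
    using wsd wss by blast
qed

end
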